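(* Let $d\ge2$ and let $n_1\ge n_2\ge n_3\ge n_4\ge0$ be integers with $n_1+n_2+n_3+n_4=2d-4$. Then \[\int_{\mathrm{Gr}(2,d+1)}\sigma_{n_1}\sigma_{n_2}\sigma_{n_3}\sigma_{n_4}(8\sigma_{11}-2\sigma_1^2)=\begin{cases}6 & \text{if } n_1=n_2=n_3=n_4,\\ 4 & \text{if } n_1=n_2\neq n_3=n_4,\\ 2 & \text{if } n_1+n_4=n_2+n_3 \text{ and } n_1\neq n_2,\\ -2 & \text{if } n_1=n_2+n_3+n_4+2,\\ 0 & \text{otherwise.}\end{cases}\]
   Context: $\sigma_{a,b}$ denote the Schubert classes on $\mathrm{Gr}(2,d+1)$, $\sigma_a=\sigma_{a,0}$, with $\sigma_a=0$ for $a>d-1$. *)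

theory Defs
  imports Main
begin

text \<open>Chow ring of Gr(2,d+1), modelled combinatorially in the Schubert basis.
  A class is an integer coefficient function on pairs (a,b); only the pairs with
  d-1 \<ge> a \<ge> b \<ge> 0 (the Schubert classes sigma_{a,b}) are meaningful.\<close>

type_synonym gcls = "nat \<Rightarrow> nat \<Rightarrow> int"

definition valid :: "nat \<Rightarrow> nat \<Rightarrow> nat \<Rightarrow> bool" where
  "valid d a b \<longleftrightarrow> b \<le> a \<and> a \<le> d - 1"

definition schub :: "nat \<Rightarrow> nat \<Rightarrow> nat \<Rightarrow> gcls" where
  "schub d a b = (\<lambda>c e. if c = a \<and> e = b \<and> valid d a b then 1 else 0)"

abbreviation sig :: "nat \<Rightarrow> nat \<Rightarrow> gcls" where
  "sig d a \<equiv> schub d a 0"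

definition cadd :: "gcls \<Rightarrow> gcls \<Rightarrow> gcls" where
  "cadd x y = (\<lambda>c e. x c e + y c e)"

definition csub :: "gcls \<Rightarrow> gcls \<Rightarrow> gcls" where
  "csub x y = (\<lambda>c e. x c e - y c e)"

definition cscale :: "int \<Rightarrow> gcls \<Rightarrow> gcls" where
  "cscale k x = (\<lambda>c e. k * x c e)"

text \<open>Pieri rule: sigma_k * sigma_{a,b} = sum of sigma_{c,e} with c+e = a+b+k,
  a \<le> c \<le> d-1, b \<le> e \<le> a.  Extended linearly.\<close>
definition pieri :: "nat \<Rightarrow> nat \<Rightarrow> gcls \<Rightarrow> gcls" where
  "pieri d k x = (\<lambda>c e. if valid d c e then
     (\<Sum>a\<le>d - 1. \<Sum>b\<le>a. x a b *
        (if c + e = a + b + k \<and> a \<le> c \<and> b \<le> e \<and> e \<le> a then 1 else 0))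
     else 0)"

text \<open>Multiplication by sigma_{a,b}, via Giambelli:
  sigma_{a,0} = sigma_a, and sigma_{a,b} = sigma_a sigma_b - sigma_{a+1} sigma_{b-1} for b \<ge> 1.\<close>
definition mult_schub :: "nat \<Rightarrow> nat \<Rightarrow> nat \<Rightarrow> gcls \<Rightarrow> gcls" where
  "mult_schub d a b x = (if b = 0 then pieri d a x
     else csub (pieri d a (pieri d b x)) (pieri d (a + 1) (pieri d (b - 1) x)))"

definition cmult :: "nat \<Rightarrow> gcls \<Rightarrow> gcls \<Rightarrow> gcls" where
  "cmult d x y = (\<lambda>c e. \<Sum>a\<le>d - 1. \<Sum>b\<le>a. y a b * mult_schub d a b x c e)"

text \<open>Degree (integral over Gr(2,d+1)): the coefficient of the point class sigma_{d-1,d-1}.\<close>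
definition integral_gr :: "nat \<Rightarrow> gcls \<Rightarrow> int" where
  "integral_gr d x = x (d - 1) (d - 1)"

end

theory Submission
  imports Defs
begin


lemma pieri_eval:
  "pieri d k x c e = (if valid d c e then
     (\<Sum>a\<in>{a. e \<le> a \<and> a \<le> c \<and> c \<le> a + k \<and> a + k \<le> c + e}. x a (c + e - (k + a))) else 0)"
proof (cases "valid d c e")
  case False thus ?thesis by (simp add: pieri_def)
next
  case True
  have inner: "(\<Sum>b\<le>a. x a b * (if c + e = a + b + k \<and> a \<le> c \<and> b \<le> e \<and> e \<le> a then 1 else 0))
      = (if e \<le> a \<and> a \<le> c \<and> c \<le> a + k \<and> a + k \<le> c + e then x a (c + e - (k + a)) else 0)" for a
  proof -
    have "(\<Sum>b\<le>a. x a b * (if c + e = a + b + k \<and> a \<le> c \<and> b \<le> e \<and> e \<le> a then 1 else 0))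
       = (\<Sum>b\<le>a. if b = c + e - (k + a) then (if e \<le> a \<and> a \<le> c \<and> c \<le> a + k \<and> a + k \<le> c + e then x a b else 0) else 0)"
      by (rule sum.cong) auto
    also have "\<dots> = (if e \<le> a \<and> a \<le> c \<and> c \<le> a + k \<and> a + k \<le> c + e then x a (c + e - (k + a)) else 0)"
      by (auto simp: sum.delta')
    finally show ?thesis .
  qed
  have "pieri d k x c e = (\<Sum>a\<le>d - 1. if e \<le> a \<and> a \<le> c \<and> c \<le> a + k \<and> a + k \<le> c + e then x a (c + e - (k + a)) else 0)"
    using True by (simp add: pieri_def inner)
  also have "\<dots> = (\<Sum>a\<in>{..d-1} \<inter> {a. e \<le> a \<and> a \<le> c \<and> c \<le> a + k \<and> a + k \<le> c + e}. x a (c + e - (k + a)))"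
    by (simp add: sum.inter_restrict)
  also have "{..d-1} \<inter> {a. e \<le> a \<and> a \<le> c \<and> c \<le> a + k \<and> a + k \<le> c + e} = {a. e \<le> a \<and> a \<le> c \<and> c \<le> a + k \<and> a + k \<le> c + e}"
    using True by (auto simp: valid_def)
  finally show ?thesis using True by simp
qed

lemma cmult_sig: "cmult d x (schub d a 0) = (if a \<le> d - 1 then pieri d a x else (\<lambda>_ _. 0))"
proof (rule ext, rule ext)
  fix c e
  have inner: "(\<Sum>b\<le>a'. schub d a 0 a' b * mult_schub d a' b x c e)
     = (if a' = a \<and> a \<le> d - 1 then pieri d a x c e else 0)" for a'
  proof -
    have "(\<Sum>b\<le>a'. schub d a 0 a' b * mult_schub d a' b x c e)
      = (\<Sum>b\<le>a'. if b = 0 then (if a' = a \<and> a \<le> d - 1 then pieri d a x c e else 0) else 0)"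
      by (rule sum.cong) (auto simp: schub_def valid_def mult_schub_def)
    also have "\<dots> = (if a' = a \<and> a \<le> d - 1 then pieri d a x c e else 0)"
      by (simp add: sum.delta')
    finally show ?thesis .
  qed
  have "cmult d x (schub d a 0) c e = (\<Sum>a'\<le>d - 1. if a' = a \<and> a \<le> d - 1 then pieri d a x c e else 0)"
    by (simp add: cmult_def inner)
  also have "\<dots> = (\<Sum>a'\<le>d - 1. if a' = a then (if a \<le> d - 1 then pieri d a x c e else 0) else 0)"
    by (rule sum.cong) auto
  also have "\<dots> = (if a \<le> d - 1 then pieri d a x c e else 0)"
    by (simp add: sum.delta')
  finally show "cmult d x (schub d a 0) c e = (if a \<le> d - 1 then pieri d a x else (\<lambda>_ _. 0)) c e"
    by simp
qed

lemma pieri_zero: "pieri d k (\<lambda>_ _. 0) = (\<lambda>_ _. 0)"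
  unfolding pieri_def by (intro ext) simp

lemma cmult_zero: "cmult d (\<lambda>_ _. 0) y = (\<lambda>_ _. 0)"
proof -
  have "mult_schub d a b (\<lambda>_ _. 0) = (\<lambda>_ _. 0)" for a b
    by (simp add: mult_schub_def csub_def pieri_zero)
  then show ?thesis by (intro ext) (simp add: cmult_def)
qed

lemma sig_big: "n > d - 1 \<Longrightarrow> sig d n = (\<lambda>_ _. 0)"
  by (auto simp: schub_def valid_def)

lemma pieri_pt: "pieri d k x (d-1) (d-1) = (if k \<le> d - 1 then x (d-1) (d-1-k) else 0)"
proof -
  have "{a. d-1 \<le> a \<and> a \<le> d-1 \<and> d-1 \<le> a + k \<and> a + k \<le> d-1 + (d-1)} = (if k \<le> d - 1 then {d-1} else {})"
    by auto
  then show ?thesis by (simp add: pieri_eval valid_def)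
qed

lemma pieri0: "valid d c e \<Longrightarrow> pieri d 0 x c e = x c e"
proof -
  assume v: "valid d c e"
  have "{a. e \<le> a \<and> a \<le> c \<and> c \<le> a + 0 \<and> a + 0 \<le> c + e} = {c}"
    using v by (auto simp: valid_def)
  then show ?thesis using v by (simp add: pieri_eval)
qed

lemma pieri1_sub: assumes "d \<ge> 2"
  shows "pieri d 1 x (d-1) (d-2) = x (d-2) (d-2) + (if d \<ge> 3 then x (d-1) (d-3) else 0)"
proof -
  have v: "valid d (d-1) (d-2)" by (simp add: valid_def)
  have pe: "pieri d 1 x (d-1) (d-2) = (\<Sum>a\<in>{a. d-2 \<le> a \<and> a \<le> d-1 \<and> d-1 \<le> a + 1 \<and> a + 1 \<le> d-1 + (d-2)}. x a (d - 1 + (d - 2) - (1 + a)))"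
    using v by (simp only: pieri_eval if_True)
  show ?thesis
  proof (cases "d \<ge> 3")
    case True
    have "{a. d-2 \<le> a \<and> a \<le> d-1 \<and> d-1 \<le> a + 1 \<and> a + 1 \<le> d-1 + (d-2)} = {d-2, d-1}"
      using True by auto
    then have "pieri d 1 x (d-1) (d-2) = (\<Sum>a\<in>{d-2, d-1}. x a (d - 1 + (d - 2) - (1 + a)))"
      using pe by simp
    also have "\<dots> = x (d-2) (d - 1 + (d - 2) - (1 + (d-2))) + x (d-1) (d - 1 + (d - 2) - (1 + (d-1)))"
      using True by (simp add: sum.insert)
    finally have f: "pieri d 1 x (d-1) (d-2) = x (d-2) (d - 1 + (d - 2) - (1 + (d-2))) + x (d-1) (d - 1 + (d - 2) - (1 + (d-1)))" .
    have "d - 1 + (d - 2) - (1 + (d - 2)) = d - 2" "d - 1 + (d - 2) - (1 + (d - 1)) = d - 3"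
      using True by auto
    then show ?thesis using True f by simp
  next
    case False
    then have d: "d = 2" using assms by auto
    have "{a. d-2 \<le> a \<and> a \<le> d-1 \<and> d-1 \<le> a + 1 \<and> a + 1 \<le> d-1 + (d-2)} = {0}"
      using d by auto
    then show ?thesis using d pe by simp
  qed
qed


lemma A2: assumes "n2 \<le> n1"
  shows "pieri d n2 (sig d n1) a b = (if b \<le> a \<and> a \<le> d-1 \<and> n1 \<le> d-1 \<and> n1 \<le> a \<and> a + b = n1 + n2 then 1 else 0)"
proof (cases "valid d a b")
  case False thus ?thesis by (auto simp: pieri_eval valid_def)
next
  case True
  let ?S = "{a'. b \<le> a' \<and> a' \<le> a \<and> a \<le> a' + n2 \<and> a' + n2 \<le> a + b}"
  have fin: "finite ?S" by (rule finite_subset[of _ "{..a}"]) auto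
  have "pieri d n2 (sig d n1) a b = (\<Sum>a'\<in>?S. sig d n1 a' (a + b - (n2 + a')))"
    using True by (simp only: pieri_eval if_True)
  also have "\<dots> = (\<Sum>a'\<in>?S. if a' = n1 then (if a + b - (n2 + n1) = 0 \<and> n1 \<le> d - 1 then 1 else 0) else 0)"
    by (rule sum.cong) (auto simp: schub_def valid_def)
  also have "\<dots> = (if n1 \<in> ?S then (if a + b - (n2 + n1) = 0 \<and> n1 \<le> d - 1 then 1 else 0) else 0)"
    by (rule sum.delta[OF fin])
  finally show ?thesis using True assms by (auto simp: valid_def)
qed

lemma A3: assumes "n2 \<le> n1" "n3 \<le> n2"
  shows "pieri d n3 (pieri d n2 (sig d n1)) c e = (if e \<le> c \<and> c \<le> d-1 \<and> n1 \<le> d-1 \<and> c + e = n1+n2+n3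
     then int (Suc (min c (n1+n2)) - max (max e (c-n3)) n1) else 0)"
proof (cases "valid d c e")
  case False thus ?thesis by (auto simp: pieri_eval valid_def)
next
  case True
  let ?S = "{a. e \<le> a \<and> a \<le> c \<and> c \<le> a + n3 \<and> a + n3 \<le> c + e}"
  let ?C = "{a. c + e - (n3 + a) \<le> a \<and> a \<le> d-1 \<and> n1 \<le> d-1 \<and> n1 \<le> a \<and> a + (c + e - (n3 + a)) = n1 + n2}"
  have fin: "finite ?S" by (rule finite_subset[of _ "{..c}"]) auto
  have "pieri d n3 (pieri d n2 (sig d n1)) c e = (\<Sum>a\<in>?S. pieri d n2 (sig d n1) a (c + e - (n3 + a)))"
    using True by (simp only: pieri_eval if_True)
  also have "\<dots> = (\<Sum>a\<in>?S. if a \<in> ?C then 1 else 0)"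
    by (rule sum.cong) (auto simp: A2[OF assms(1)])
  also have "\<dots> = (\<Sum>a\<in>?S \<inter> ?C. 1)"
    using fin by (simp only: sum.inter_restrict)
  also have "\<dots> = int (card (?S \<inter> ?C))" by simp
  also have "?S \<inter> ?C = (if n1 \<le> d-1 \<and> c + e = n1+n2+n3 then {max (max e (c-n3)) n1 .. min c (n1+n2)} else {})"
    using True assms by (auto simp: valid_def)
  finally show ?thesis using True by (auto simp: valid_def)
qed


lemma sig1_sq_val: assumes "d \<ge> 2" "b \<le> a" "a \<le> d-1"
  shows "pieri d 1 (sig d 1) a b = (if (a = 2 \<and> b = 0) \<or> (a = 1 \<and> b = 1) then 1 else 0)"
proof -
  have "1 \<le> (1::nat)" by simp
  then have "pieri d 1 (sig d 1) a b = (if b \<le> a \<and> a \<le> d-1 \<and> 1 \<le> d-1 \<and> 1 \<le> a \<and> a + b = 1 + 1 then 1 else 0)"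
    by (rule A2)
  then show ?thesis using assms by auto
qed

lemma integral_Y: assumes "d \<ge> 2"
  shows "integral_gr d (cmult d X (csub (cscale 8 (schub d 1 1)) (cscale 2 (cmult d (sig d 1) (sig d 1)))))
    = 6 * X (d-2) (d-2) - 2 * (if d \<ge> 3 then X (d-1) (d-3) else 0)"
proof -
  let ?Y = "csub (cscale 8 (schub d 1 1)) (cscale 2 (cmult d (sig d 1) (sig d 1)))"
  have h1: "(1::nat) \<le> d - 1" using assms by arith
  have sq: "cmult d (sig d 1) (sig d 1) = pieri d 1 (sig d 1)"
    by (simp only: cmult_sig h1 if_True)
  have Yv: "?Y a b = (if a = 1 \<and> b = 1 then 6 else if a = 2 \<and> b = 0 then -2 else 0)"
    if "b \<le> a" "a \<le> d-1" for a b
    using that assms sig1_sq_val[OF assms that] unfolding sq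
    by (auto simp: csub_def cscale_def schub_def valid_def)
  define M where "M a b = mult_schub d a b X (d-1) (d-1)" for a b
  have "integral_gr d (cmult d X ?Y) = (\<Sum>a\<le>d-1. \<Sum>b\<le>a. ?Y a b * M a b)"
    by (simp add: integral_gr_def cmult_def M_def)
  also have "\<dots> = (\<Sum>a\<le>d-1. \<Sum>b\<le>a. (if b = 1 then (if a = 1 then 6 * M a b else 0) else 0)
        + (if b = 0 then (if a = 2 then -2 * M a b else 0) else 0))"
  proof (intro sum.cong refl)
    fix a b assume ab: "a \<in> {..d-1}" "b \<in> {..a}"
    then have "?Y a b = (if a = 1 \<and> b = 1 then 6 else if a = 2 \<and> b = 0 then -2 else 0)"
      by (intro Yv) auto
    then show "?Y a b * M a b = (if b = 1 then (if a = 1 then 6 * M a b else 0) else 0)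
        + (if b = 0 then (if a = 2 then -2 * M a b else 0) else 0)" by auto
  qed
  also have "\<dots> = (\<Sum>a\<le>d-1. (if a = 1 then 6 * M 1 1 else 0) + (if a = 2 then -2 * M 2 0 else 0))"
    by (intro sum.cong refl) (auto simp: sum.distrib)
  also have "\<dots> = 6 * M 1 1 + (if d \<ge> 3 then -2 * M 2 0 else 0)"
    using assms by (auto simp: sum.distrib)
  finally have I: "integral_gr d (cmult d X ?Y) = 6 * M 1 1 + (if d \<ge> 3 then -2 * M 2 0 else 0)" .
  have p11: "pieri d 1 (pieri d 1 X) (d-1) (d-1) = X (d-2) (d-2) + (if d \<ge> 3 then X (d-1) (d-3) else 0)"
  proof -
    have "pieri d 1 (pieri d 1 X) (d-1) (d-1) = pieri d 1 X (d-1) (d-1-1)"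
      by (simp only: pieri_pt h1 if_True)
    also have "d - 1 - 1 = d - 2" by simp
    finally show ?thesis using pieri1_sub[OF assms] by simp
  qed
  have p20: "pieri d 2 (pieri d 0 X) (d-1) (d-1) = (if d \<ge> 3 then X (d-1) (d-3) else 0)"
  proof -
    have "pieri d 2 (pieri d 0 X) (d-1) (d-1) = (if 2 \<le> d - 1 then pieri d 0 X (d-1) (d-1-2) else 0)"
      by (rule pieri_pt)
    also have "d - 1 - 2 = d - 3" by simp
    finally show ?thesis using pieri0[of d "d-1" "d-3" X] by (auto simp: valid_def)
  qed
  have p2: "pieri d 2 X (d-1) (d-1) = (if d \<ge> 3 then X (d-1) (d-3) else 0)"
  proof -
    have "pieri d 2 X (d-1) (d-1) = (if 2 \<le> d - 1 then X (d-1) (d-1-2) else 0)"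
      by (rule pieri_pt)
    also have "d - 1 - 2 = d - 3" by simp
    finally show ?thesis by auto
  qed
  have ms11: "mult_schub d 1 1 X = csub (pieri d 1 (pieri d 1 X)) (pieri d 2 (pieri d 0 X))"
    unfolding mult_schub_def by (simp add: numeral_2_eq_2)
  have "M 1 1 = pieri d 1 (pieri d 1 X) (d-1) (d-1) - pieri d 2 (pieri d 0 X) (d-1) (d-1)"
    unfolding M_def ms11 csub_def by (rule refl)
  then have "M 1 1 = X (d-2) (d-2)"
    using p11 p20 by simp
  moreover have "M 2 0 = (if d \<ge> 3 then X (d-1) (d-3) else 0)"
    using p2 by (simp add: M_def mult_schub_def)
  ultimately show ?thesis using I by simp
qed


lemma X1: assumes "n4 \<le> d - 2"
  shows "pieri d n4 F (d-2) (d-2) = F (d-2) (d-2-n4)"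
proof -
  have v: "valid d (d-2) (d-2)" by (simp add: valid_def)
  have "pieri d n4 F (d-2) (d-2) = (\<Sum>a\<in>{a. d-2 \<le> a \<and> a \<le> d-2 \<and> d-2 \<le> a + n4 \<and> a + n4 \<le> d-2 + (d-2)}. F a (d-2 + (d-2) - (n4 + a)))"
    using v by (simp only: pieri_eval if_True)
  also have "{a. d-2 \<le> a \<and> a \<le> d-2 \<and> d-2 \<le> a + n4 \<and> a + n4 \<le> d-2 + (d-2)} = {d-2}"
    using assms by auto
  finally have f: "pieri d n4 F (d-2) (d-2) = (\<Sum>a\<in>{d-2}. F a (d-2 + (d-2) - (n4 + a)))" .
  have "d-2 + (d-2) - (n4 + (d-2)) = d-2-n4" by simp
  then show ?thesis using f by simp
qed

lemma X2: assumes "d \<ge> 3"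
  shows "pieri d n4 F (d-1) (d-3) =
    (\<Sum>a\<in>{d-3, d-2, d-1}. if d-3 \<le> a \<and> a \<le> d-1 \<and> d-1 \<le> a + n4 \<and> a + n4 \<le> d-1 + (d-3) then F a (d-1 + (d-3) - (n4 + a)) else 0)"
proof -
  let ?S = "{a. d-3 \<le> a \<and> a \<le> d-1 \<and> d-1 \<le> a + n4 \<and> a + n4 \<le> d-1 + (d-3)}"
  have v: "valid d (d-1) (d-3)" by (simp add: valid_def)
  have "pieri d n4 F (d-1) (d-3) = (\<Sum>a\<in>?S. F a (d-1 + (d-3) - (n4 + a)))"
    using v by (simp only: pieri_eval if_True)
  also have "?S = {d-3, d-2, d-1} \<inter> ?S" using assms by auto
  also have "(\<Sum>a\<in>{d-3, d-2, d-1} \<inter> ?S. F a (d-1 + (d-3) - (n4 + a))) =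
     (\<Sum>a\<in>{d-3, d-2, d-1}. if a \<in> ?S then F a (d-1 + (d-3) - (n4 + a)) else 0)"
    by (rule sum.inter_restrict) simp
  finally show ?thesis by simp
qed

lemma sum3: fixes d :: nat assumes "d \<ge> 3"
  shows "(\<Sum>a\<in>{d-3, d-2, d-1}. g a) = g (d-3) + g (d-2) + (g (d-1) :: int)"
proof -
  have "d - 3 \<noteq> d - 2" "d - 3 \<noteq> d - 1" "d - 2 \<noteq> d - 1" using assms by arith+
  then show ?thesis by (simp add: sum.insert algebra_simps)
qed


definition A3f :: "nat \<Rightarrow> nat \<Rightarrow> nat \<Rightarrow> nat \<Rightarrow> nat \<Rightarrow> nat \<Rightarrow> int" where
 "A3f d n1 n2 n3 c e = (if e \<le> c \<and> c \<le> d-1 \<and> n1 \<le> d-1 \<and> c+e = n1+n2+n3 then int (Suc (min c (n1+n2)) - max (max e (c-n3)) n1) else 0)"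
definition G :: "nat \<Rightarrow> nat \<Rightarrow> nat \<Rightarrow> nat \<Rightarrow> nat \<Rightarrow> nat \<Rightarrow> int" where
 "G d n1 n2 n3 n4 a = (if d-3 \<le> a \<and> a \<le> d-1 \<and> d-1 \<le> a+n4 \<and> a+n4 \<le> d-1+(d-3) then A3f d n1 n2 n3 a (d-1+(d-3)-(n4+a)) else 0)"
context fixes d n1 n2 n3 n4 :: nat
  assumes H: "n1 \<ge> n2" "n2 \<ge> n3" "n3 \<ge> n4" "n1+n2+n3+n4 = 2*d-4" "d \<ge> 2" "n1 \<le> d-1"
begin
lemma E1: "A3f d n1 n2 n3 (d-2) (d-2-n4) = int (d-1 - max (d-2-n4) n1)"
proof -
  have c: "d-2-n4 \<le> d-2 \<and> d-2 \<le> d-1 \<and> n1 \<le> d-1 \<and> d-2+(d-2-n4) = n1+n2+n3" using H by linarith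
  have mn: "min (d-2) (n1+n2) = d-2" using H by linarith
  have mx: "max (d-2-n4) (d-2-n3) = d-2-n4" using H by linarith
  have s: "Suc (d-2) = d-1" using H by linarith
  show ?thesis by (simp only: A3f_def if_P[OF c] mn mx s)
qed
lemma E2: assumes d3: "d \<ge> 3" shows "G d n1 n2 n3 n4 (d-3) = (if n4 \<ge> 2 then int (d-2 - max (d-1-n4) n1) else 0)"
proof (cases "n4 \<ge> 2")
  case False
  have nc: "\<not> (d-3 \<le> d-3 \<and> d-3 \<le> d-1 \<and> d-1 \<le> d-3+n4 \<and> d-3+n4 \<le> d-1+(d-3))" using False d3 by linarith
  show ?thesis using False by (simp only: G_def if_not_P[OF nc] if_False)
next
  case True
  have g: "d-3 \<le> d-3 \<and> d-3 \<le> d-1 \<and> d-1 \<le> d-3+n4 \<and> d-3+n4 \<le> d-1+(d-3)" using True d3 H by linarith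
  have e: "d-1+(d-3)-(n4+(d-3)) = d-1-n4" using d3 by simp
  have c: "d-1-n4 \<le> d-3 \<and> d-3 \<le> d-1 \<and> n1 \<le> d-1 \<and> d-3+(d-1-n4) = n1+n2+n3" using H True d3 by linarith
  have mn: "min (d-3) (n1+n2) = d-3" using H d3 by linarith
  have mx: "max (d-1-n4) (d-3-n3) = d-1-n4" using H by linarith
  have s: "Suc (d-3) = d-2" using d3 by linarith
  show ?thesis using True by (simp only: G_def if_P[OF g] e A3f_def if_P[OF c] mn mx s if_True)
qed
lemma E3: assumes d3: "d \<ge> 3" shows "G d n1 n2 n3 n4 (d-2) = (if n4 \<ge> 1 then int (d-1 - max (d-2-n4) n1) else 0)"
proof (cases "n4 \<ge> 1")
  case False
  have nc: "\<not> (d-3 \<le> d-2 \<and> d-2 \<le> d-1 \<and> d-1 \<le> d-2+n4 \<and> d-2+n4 \<le> d-1+(d-3))" using False d3 by linarith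
  show ?thesis using False by (simp only: G_def if_not_P[OF nc] if_False)
next
  case True
  have g: "d-3 \<le> d-2 \<and> d-2 \<le> d-1 \<and> d-1 \<le> d-2+n4 \<and> d-2+n4 \<le> d-1+(d-3)" using True d3 H by linarith
  have e: "d-1+(d-3)-(n4+(d-2)) = d-2-n4" using d3 by simp
  show ?thesis using True by (simp only: G_def if_P[OF g] e E1 if_True)
qed
lemma E4: assumes d3: "d \<ge> 3" shows "G d n1 n2 n3 n4 (d-1) = int (Suc (min (d-1) (n1+n2)) - max (max (d-3-n4) (d-1-n3)) n1)"
proof -
  have g: "d-3 \<le> d-1 \<and> d-1 \<le> d-1 \<and> d-1 \<le> d-1+n4 \<and> d-1+n4 \<le> d-1+(d-3)" using d3 H by linarith
  have e: "d-1+(d-3)-(n4+(d-1)) = d-3-n4" using d3 by simp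
  have c: "d-3-n4 \<le> d-1 \<and> d-1 \<le> d-1 \<and> n1 \<le> d-1 \<and> d-1+(d-3-n4) = n1+n2+n3" using H d3 by linarith
  show ?thesis by (simp only: G_def if_P[OF g] e A3f_def if_P[OF c])
qed
end

context fixes d n1 n2 n3 n4 :: nat
  assumes H: "n1 \<ge> n2" "n2 \<ge> n3" "n3 \<ge> n4" "n1+n2+n3+n4 = 2*d-4" "d \<ge> 3" "n1 \<le> d-1"
begin
lemma C1: "int (d-1 - max (d-2-n4) n1) = int d - 1 - max (int d - 2 - int n4) (int n1)"
  using H by (simp add: max_def) arith
lemma C2: "int (d-2 - max (d-1-n4) n1) = max 0 (int d - 2 - max (int d - 1 - int n4) (int n1))"
  using H by (simp add: max_def) arith
lemma C4: "int (Suc (min (d-1) (n1+n2)) - max (max (d-3-n4) (d-1-n3)) n1) = max 0 (min (int d) (int n1 + int n2 + 1) - max (max (int d - 3 - int n4) (int d - 1 - int n3)) (int n1))"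
  using H by (simp add: max_def min_def) arith
end

lemma ar:
  fixes d n1 n2 n3 n4 :: nat
  assumes "n1 \<ge> n2" and "n2 \<ge> n3" and "n3 \<ge> n4" and "n1+n2+n3+n4 = 2*d-4" "d \<ge> 3" "n1 \<le> d-1"
  shows "6 * (int d - 1 - max (int d - 2 - int n4) (int n1)) - 2 * (
     (if n4 \<ge> 2 then max 0 (int d - 2 - max (int d - 1 - int n4) (int n1)) else 0) +
     (if n4 \<ge> 1 then int d - 1 - max (int d - 2 - int n4) (int n1) else 0) +
     max 0 (min (int d) (int n1 + int n2 + 1) - max (max (int d - 3 - int n4) (int d - 1 - int n3)) (int n1)))
   = (if n1 = n2 \<and> n2 = n3 \<and> n3 = n4 then 6
            else if n1 = n2 \<and> n2 \<noteq> n3 \<and> n3 = n4 then 4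
            else if n1 + n4 = n2 + n3 \<and> n1 \<noteq> n2 then 2
            else if n1 = n2 + n3 + n4 + 2 then -2
            else 0)"
proof -
  have I: "int n1 \<ge> int n2" "int n2 \<ge> int n3" "int n3 \<ge> int n4" "int n4 \<ge> 0"
    "int n1 + int n2 + int n3 + int n4 = 2 * int d - 4" "int d \<ge> 3" "int n1 \<le> int d - 1"
    using assms by linarith+
  have R: "(if n1 = n2 \<and> n2 = n3 \<and> n3 = n4 then 6
            else if n1 = n2 \<and> n2 \<noteq> n3 \<and> n3 = n4 then 4
            else if n1 + n4 = n2 + n3 \<and> n1 \<noteq> n2 then 2
            else if n1 = n2 + n3 + n4 + 2 then -2
            else 0) = (if int n1 = int n2 \<and> int n2 = int n3 \<and> int n3 = int n4 then 6
            else if int n1 = int n2 \<and> int n2 \<noteq> int n3 \<and> int n3 = int n4 then 4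
            else if int n1 + int n4 = int n2 + int n3 \<and> int n1 \<noteq> int n2 then 2
            else if int n1 = int n2 + int n3 + int n4 + 2 then -2
            else (0::int))" by simp
  have L: "(if n4 \<ge> 2 then max 0 (int d - 2 - max (int d - 1 - int n4) (int n1)) else 0) = (if int n4 \<ge> 2 then max 0 (int d - 2 - max (int d - 1 - int n4) (int n1)) else 0)"
     "(if n4 \<ge> 1 then int d - 1 - max (int d - 2 - int n4) (int n1) else 0) = (if int n4 \<ge> 1 then int d - 1 - max (int d - 2 - int n4) (int n1) else 0)"
    by simp_all
  define D where "D = int d"
  define N1 where "N1 = int n1"
  define N2 where "N2 = int n2"
  define N3 where "N3 = int n3"
  define N4 where "N4 = int n4"
  note I' = I[folded D_def N1_def N2_def N3_def N4_def]
  consider "N1 = D-1" | "N1 \<le> D-2" "N1+N4 \<le> D-2" "N4 = 0" | "N1 \<le> D-2" "N1+N4 \<le> D-2" "N4 = 1" | "N1 \<le> D-2" "N1+N4 \<le> D-2" "N4 \<ge> 2"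
    | "N1 \<le> D-2" "N1+N4 > D-2" "N4 = 0" | "N1 \<le> D-2" "N1+N4 > D-2" "N4 = 1" | "N1 \<le> D-2" "N1+N4 > D-2" "N4 \<ge> 2"
    using I' by linarith
  then have "6 * (D - 1 - max (D - 2 - N4) N1) - 2 * (
     (if N4 \<ge> 2 then max 0 (D - 2 - max (D - 1 - N4) N1) else 0) +
     (if N4 \<ge> 1 then D - 1 - max (D - 2 - N4) N1 else 0) +
     max 0 (min D (N1 + N2 + 1) - max (max (D - 3 - N4) (D - 1 - N3)) N1))
   = (if N1 = N2 \<and> N2 = N3 \<and> N3 = N4 then 6
            else if N1 = N2 \<and> N2 \<noteq> N3 \<and> N3 = N4 then 4
            else if N1 + N4 = N2 + N3 \<and> N1 \<noteq> N2 then 2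
            else if N1 = N2 + N3 + N4 + 2 then -2
            else 0)"
  proof cases
    case 1 thus ?thesis using I' unfolding max_def min_def by (smt (verit))
  next case 2 thus ?thesis using I' unfolding max_def min_def by (smt (verit))
  next case 3 thus ?thesis using I' unfolding max_def min_def by (smt (verit))
  next case 4 thus ?thesis using I' unfolding max_def min_def by (smt (verit))
  next case 5 thus ?thesis using I' unfolding max_def min_def by (smt (verit))
  next case 6 thus ?thesis using I' unfolding max_def min_def by (smt (verit))
  next case 7 thus ?thesis using I' unfolding max_def min_def by (smt (verit))
  qed
  then show ?thesis unfolding R L D_def N1_def N2_def N3_def N4_def .
qed

lemma A3': assumes "n2 \<le> n1" "n3 \<le> n2"
  shows "pieri d n3 (pieri d n2 (sig d n1)) c e = A3f d n1 n2 n3 c e"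
  unfolding A3f_def by (rule A3[OF assms])

theorem lemma4p12:
  fixes d n1 n2 n3 n4 :: nat
  assumes "d \<ge> 2"
    and "n1 \<ge> n2" and "n2 \<ge> n3" and "n3 \<ge> n4"
    and "n1 + n2 + n3 + n4 = 2 * d - 4"
  shows "integral_gr d
           (cmult d (cmult d (cmult d (cmult d (sig d n1) (sig d n2)) (sig d n3)) (sig d n4))
              (csub (cscale 8 (schub d 1 1)) (cscale 2 (cmult d (sig d 1) (sig d 1)))))
         = (if n1 = n2 \<and> n2 = n3 \<and> n3 = n4 then 6
            else if n1 = n2 \<and> n2 \<noteq> n3 \<and> n3 = n4 then 4
            else if n1 + n4 = n2 + n3 \<and> n1 \<noteq> n2 then 2
            else if n1 = n2 + n3 + n4 + 2 then -2
            else 0)"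
proof -
  let ?Y = "csub (cscale 8 (schub d 1 1)) (cscale 2 (cmult d (sig d 1) (sig d 1)))"
  let ?X = "cmult d (cmult d (cmult d (sig d n1) (sig d n2)) (sig d n3)) (sig d n4)"
  have IY: "integral_gr d (cmult d ?X ?Y) = 6 * ?X (d-2) (d-2) - 2 * (if d \<ge> 3 then ?X (d-1) (d-3) else 0)"
    by (rule integral_Y[OF assms(1)])
  show ?thesis
  proof (cases "n1 \<le> d - 1")
    case False
    then have "sig d n1 = (\<lambda>_ _. 0)" by (intro sig_big) simp
    then have X0: "?X = (\<lambda>_ _. 0)" by (simp add: cmult_zero)
    have h: "\<not> (n1 = n2 \<and> n2 = n3 \<and> n3 = n4)" "\<not> (n1 = n2 \<and> n2 \<noteq> n3 \<and> n3 = n4)"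
      "\<not> (n1 + n4 = n2 + n3 \<and> n1 \<noteq> n2)" "n1 \<noteq> n2 + n3 + n4 + 2"
      using assms False by linarith+
    have "integral_gr d (cmult d ?X ?Y) = 0" unfolding X0 by (simp add: cmult_zero integral_gr_def)
    then show ?thesis using h by simp
  next
    case True
    have le: "n2 \<le> d - 1" "n3 \<le> d - 1" "n4 \<le> d - 1" "n4 \<le> d - 2" using assms by linarith+
    have X: "?X = pieri d n4 (pieri d n3 (pieri d n2 (sig d n1)))"
      by (simp only: cmult_sig le if_True)
    have X1v: "?X (d-2) (d-2) = A3f d n1 n2 n3 (d-2) (d-2-n4)"
      unfolding X X1[OF le(4)] by (rule A3'[OF assms(2) assms(3)])
    show ?thesis
    proof (cases "d \<ge> 3")
      case False
      then have d2: "d = 2" using assms by linarith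
      then have z: "n1 = 0" "n2 = 0" "n3 = 0" "n4 = 0" using assms by linarith+
      have "A3f d n1 n2 n3 (d-2) (d-2-n4) = 1" using d2 z by (simp add: A3f_def)
      then show ?thesis using IY X1v False z by simp
    next
      case d3: True
      have X2v: "?X (d-1) (d-3) = G d n1 n2 n3 n4 (d-3) + G d n1 n2 n3 n4 (d-2) + G d n1 n2 n3 n4 (d-1)"
        unfolding X X2[OF d3] sum3[OF d3] G_def A3'[OF assms(2) assms(3)] by (rule refl)
      have E: "A3f d n1 n2 n3 (d-2) (d-2-n4) = int (d-1 - max (d-2-n4) n1)"
        "G d n1 n2 n3 n4 (d-3) = (if n4 \<ge> 2 then int (d-2 - max (d-1-n4) n1) else 0)"
        "G d n1 n2 n3 n4 (d-2) = (if n4 \<ge> 1 then int (d-1 - max (d-2-n4) n1) else 0)"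
        "G d n1 n2 n3 n4 (d-1) = int (Suc (min (d-1) (n1+n2)) - max (max (d-3-n4) (d-1-n3)) n1)"
        using E1[OF assms(2-5) assms(1) True] E2[OF assms(2-5) assms(1) True d3]
          E3[OF assms(2-5) assms(1) True d3] E4[OF assms(2-5) assms(1) True d3] by auto
      have CC: "int (d-1 - max (d-2-n4) n1) = int d - 1 - max (int d - 2 - int n4) (int n1)"
        "int (d-2 - max (d-1-n4) n1) = max 0 (int d - 2 - max (int d - 1 - int n4) (int n1))"
        "int (Suc (min (d-1) (n1+n2)) - max (max (d-3-n4) (d-1-n3)) n1) = max 0 (min (int d) (int n1 + int n2 + 1) - max (max (int d - 3 - int n4) (int d - 1 - int n3)) (int n1))"
        using C1[OF assms(2-5) d3 True] C2[OF assms(2-5) d3 True] C4[OF assms(2-5) d3 True] by auto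
      have "integral_gr d (cmult d ?X ?Y) = 6 * (int d - 1 - max (int d - 2 - int n4) (int n1)) - 2 * (
         (if n4 \<ge> 2 then max 0 (int d - 2 - max (int d - 1 - int n4) (int n1)) else 0) +
         (if n4 \<ge> 1 then int d - 1 - max (int d - 2 - int n4) (int n1) else 0) +
         max 0 (min (int d) (int n1 + int n2 + 1) - max (max (int d - 3 - int n4) (int d - 1 - int n3)) (int n1)))"
        unfolding IY X1v X2v E CC using d3 by simp
      also have "\<dots> = (if n1 = n2 \<and> n2 = n3 \<and> n3 = n4 then 6
            else if n1 = n2 \<and> n2 \<noteq> n3 \<and> n3 = n4 then 4
            else if n1 + n4 = n2 + n3 \<and> n1 \<noteq> n2 then 2
            else if n1 = n2 + n3 + n4 + 2 then -2
            else 0)"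
        by (rule ar[OF assms(2-5) d3 True])
      finally show ?thesis .
    qed
  qed
qed

end
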